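(* Let $n=m+s$ and consider the system $$\begin{bmatrix}\dot x_a\\ \dot x_u\end{bmatrix}=[J(x)-R(x)]\begin{bmatrix}\nabla_{x_a}\mathcal H(x)\\ \nabla_{x_u}\mathcal H(x)\end{bmatrix}+\begin{bmatrix}u-d_a(x)\\ 0_{s\times 1}\end{bmatrix},$$ with $x=\operatorname{col}(x_a,x_u)$, $x_a\in\mathbb R^m$, $x_u\in\mathbb R^s$, $u\in\mathbb R^m$, smooth $\mathcal H:\mathbb R^n\to\mathbb R_+$ having an isolated minimum at $x^\star=(x_a^\star,x_u^\star)$, and $J=\begin{bmatrix}J_{aa}&J_{au}\\-J_{au}^\top&J_{uu}\end{bmatrix}=-J^\top$, $R=\begin{bmatrix}R_{aa}&R_{au}\\R_{au}^\top&R_{uu}\end{bmatrix}=R^\top\ge0$ (possibly state-dependent). Assume the matched disturbance satisfies $d_a(x)=G_d(x)\bar d_a$ with $\bar d_a\in\mathbb R^m$ constant and $G_d:\mathbb R^n\to\mathbb R^{m\times m}$ full rank with $G_d<0$. Let $K_i\in\mathbb R^{m\times m}$ be symmetric positive definite, and choose $$J_{c_1}=\tfrac12(G_d-G_d^\top),\quad R_{c_1}=-\tfrac12(G_d+G_d^\top),\quad R_{c_2}>0.$$ Close the loop with $$u=[-J_{aa}+R_{aa}+J_{c_1}-R_{c_1}-R_{c_2}]\nabla_{x_a}\mathcal H+[J_{c_1}-R_{c_1}]K_i(x_a-x_c)+2R_{au}\nabla_{x_u}\mathcal H,$$ $$\dot x_c=-R_{c_2}\nabla_{x_a}\mathcal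 H+(J_{au}+R_{au})\nabla_{x_u}\mathcal H,\qquad x_c\in\mathbb R^m,$$ and write the closed loop in the coordinates $w=(w_a,w_u,w_c)=(x_a,x_u,x_a-x_c)$. Let $\mathcal H_{cl}(w)=\mathcal H(w_a,w_u)+\tfrac12 w_c^\top K_iw_c$. Then: (i) $\bar w:=(x_a^\star,x_u^\star,K_i^{-1}\bar d_a)$ is a stable equilibrium of the closed-loop system; (ii) if the signal $Y_a:=\operatorname{col}(\nabla_{w_a}\mathcal H_{cl},\ w_c-\bar w_c)$, where $\bar w_c=K_i^{-1}\bar d_a$, is a detectable output of the closed loop, then the equilibrium $\bar w$ is asymptotically stable; (iii) the stability properties are global if $\mathcal H$ is radially unbounded.
   Context: $\nabla$ denotes the transposed gradient and $\nabla_{x_a},\nabla_{x_u}$ (resp. $\nabla_{w_a}$) transposed partial gradients. $G_d<0$ means $G_d$ is sign definite (negative definite, i.e. $v^\top G_d v<0$ for $v\neq0$). "Detectable output" means that closed-loop solutions along which the output is identically zero converge to the equilibrium. All functions are smooth. *)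

theory Defs
  imports "HOL-Analysis.Analysis"
begin

text \<open>A real function on R^n is smooth iff it lies in a family of continuous functions
  that is closed under taking (everywhere existing) partial derivatives, i.e. all partial
  derivatives of all orders exist and are continuous.\<close>
definition smooth_fun :: "(real^'n \<Rightarrow> real) \<Rightarrow> bool" where
  "smooth_fun f \<longleftrightarrow> (\<exists>S. f \<in> S \<and>
     (\<forall>h\<in>S. continuous_on UNIV h \<and>
        (\<forall>i. \<exists>h'\<in>S. \<forall>x. ((\<lambda>t. h (x + t *\<^sub>R axis i 1)) has_field_derivative h' x) (at 0))))"

definition smooth_mat :: "(real^'n \<Rightarrow> real^'c^'r) \<Rightarrow> bool" where
  "smooth_mat A \<longleftrightarrow> (\<forall>i j. smooth_fun (\<lambda>x. A x $ i $ j))"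

definition xa_of :: "real^('m::finite+'s::finite) \<Rightarrow> real^'m" where
  "xa_of x = (\<chi> i. x $ Inl i)"
definition xu_of :: "real^('m::finite+'s::finite) \<Rightarrow> real^'s" where
  "xu_of x = (\<chi> j. x $ Inr j)"
definition col_au :: "real^'m \<Rightarrow> real^'s \<Rightarrow> real^('m::finite+'s::finite)" where
  "col_au a b = (\<chi> k. case k of Inl i \<Rightarrow> a $ i | Inr j \<Rightarrow> b $ j)"

definition blk_aa :: "real^('m::finite+'s::finite)^('m+'s) \<Rightarrow> real^'m^'m" where
  "blk_aa A = (\<chi> i j. A $ Inl i $ Inl j)"
definition blk_au :: "real^('m::finite+'s::finite)^('m+'s) \<Rightarrow> real^'s^'m" where
  "blk_au A = (\<chi> i j. A $ Inl i $ Inr j)"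

definition pos_def :: "real^'n^'n \<Rightarrow> bool" where
  "pos_def A \<longleftrightarrow> (\<forall>v. v \<noteq> 0 \<longrightarrow> v \<bullet> (A *v v) > 0)"
definition neg_def :: "real^'n^'n \<Rightarrow> bool" where
  "neg_def A \<longleftrightarrow> (\<forall>v. v \<noteq> 0 \<longrightarrow> v \<bullet> (A *v v) < 0)"
definition pos_semidef :: "real^'n^'n \<Rightarrow> bool" where
  "pos_semidef A \<longleftrightarrow> (\<forall>v. v \<bullet> (A *v v) \<ge> 0)"

definition plant_field ::
  "(real^('m::finite+'s::finite) \<Rightarrow> real^('m::finite+'s::finite)^('m+'s)) \<Rightarrow> (real^('m::finite+'s::finite) \<Rightarrow> real^('m::finite+'s::finite)^('m+'s)) \<Rightarrow>
   (real^('m::finite+'s::finite) \<Rightarrow> real^'m^'m) \<Rightarrow> real^'m \<Rightarrow> (real^('m::finite+'s::finite) \<Rightarrow> real^('m::finite+'s::finite)) \<Rightarrow>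
   real^('m::finite+'s::finite) \<Rightarrow> real^'m \<Rightarrow> real^('m::finite+'s::finite)" where
  "plant_field J R Gd dbar gradH x u =
     (J x - R x) *v gradH x + col_au (u - Gd x *v dbar) 0"

definition Jc1 :: "(real^('m::finite+'s::finite) \<Rightarrow> real^'m^'m) \<Rightarrow> real^('m::finite+'s::finite) \<Rightarrow> real^'m^'m" where
  "Jc1 Gd x = (1/2) *\<^sub>R (Gd x - transpose (Gd x))"
definition Rc1 :: "(real^('m::finite+'s::finite) \<Rightarrow> real^'m^'m) \<Rightarrow> real^('m::finite+'s::finite) \<Rightarrow> real^'m^'m" where
  "Rc1 Gd x = - ((1/2) *\<^sub>R (Gd x + transpose (Gd x)))"

definition control_u ::
  "(real^('m::finite+'s::finite) \<Rightarrow> real^('m::finite+'s::finite)^('m+'s)) \<Rightarrow> (real^('m::finite+'s::finite) \<Rightarrow> real^('m::finite+'s::finite)^('m+'s)) \<Rightarrow>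
   (real^('m::finite+'s::finite) \<Rightarrow> real^'m^'m) \<Rightarrow> real^'m^'m \<Rightarrow> real^'m^'m \<Rightarrow> (real^('m::finite+'s::finite) \<Rightarrow> real^('m::finite+'s::finite)) \<Rightarrow>
   real^('m::finite+'s::finite) \<Rightarrow> real^'m \<Rightarrow> real^'m" where
  "control_u J R Gd Ki Rc2 gradH x xc =
     (- blk_aa (J x) + blk_aa (R x) + Jc1 Gd x - Rc1 Gd x - Rc2) *v xa_of (gradH x)
     + (Jc1 Gd x - Rc1 Gd x) *v (Ki *v (xa_of x - xc))
     + 2 *\<^sub>R (blk_au (R x) *v xu_of (gradH x))"

definition controller_field ::
  "(real^('m::finite+'s::finite) \<Rightarrow> real^('m::finite+'s::finite)^('m+'s)) \<Rightarrow> (real^('m::finite+'s::finite) \<Rightarrow> real^('m::finite+'s::finite)^('m+'s)) \<Rightarrow>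
   real^'m^'m \<Rightarrow> (real^('m::finite+'s::finite) \<Rightarrow> real^('m::finite+'s::finite)) \<Rightarrow> real^('m::finite+'s::finite) \<Rightarrow> real^'m" where
  "controller_field J R Rc2 gradH x =
     - (Rc2 *v xa_of (gradH x)) + (blk_au (J x) + blk_au (R x)) *v xu_of (gradH x)"

text \<open>Closed loop in the coordinates w = (col(w_a, w_u), w_c) = (x, x_a - x_c);
  thus x_c = w_a - w_c and w_c_dot = x_a_dot - x_c_dot.\<close>
definition closed_loop ::
  "(real^('m::finite+'s::finite) \<Rightarrow> real^('m::finite+'s::finite)^('m+'s)) \<Rightarrow> (real^('m::finite+'s::finite) \<Rightarrow> real^('m::finite+'s::finite)^('m+'s)) \<Rightarrow>
   (real^('m::finite+'s::finite) \<Rightarrow> real^'m^'m) \<Rightarrow> real^'m \<Rightarrow> real^'m^'m \<Rightarrow> real^'m^'m \<Rightarrow>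
   (real^('m::finite+'s::finite) \<Rightarrow> real^('m::finite+'s::finite)) \<Rightarrow> (real^('m::finite+'s::finite)) \<times> (real^'m) \<Rightarrow> (real^('m::finite+'s::finite)) \<times> (real^'m)" where
  "closed_loop J R Gd dbar Ki Rc2 gradH w =
     (let x = fst w; xc = xa_of x - snd w;
          xdot = plant_field J R Gd dbar gradH x (control_u J R Gd Ki Rc2 gradH x xc)
      in (xdot, xa_of xdot - controller_field J R Rc2 gradH x))"

definition ode_sol_on :: "('a::real_normed_vector \<Rightarrow> 'a) \<Rightarrow> real \<Rightarrow> (real \<Rightarrow> 'a) \<Rightarrow> bool" where
  "ode_sol_on F T w \<longleftrightarrow>
     (\<forall>t\<in>{0..T}. (w has_vector_derivative F (w t)) (at t within {0..T}))"

definition ode_sol :: "('a::real_normed_vector \<Rightarrow> 'a) \<Rightarrow> (real \<Rightarrow> 'a) \<Rightarrow> bool" where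
  "ode_sol F w \<longleftrightarrow> (\<forall>t\<ge>0. (w has_vector_derivative F (w t)) (at t within {0..}))"

definition equilibrium :: "('a::real_normed_vector \<Rightarrow> 'a) \<Rightarrow> 'a \<Rightarrow> bool" where
  "equilibrium F e \<longleftrightarrow> F e = 0"

definition lyap_stable :: "('a::real_normed_vector \<Rightarrow> 'a) \<Rightarrow> 'a \<Rightarrow> bool" where
  "lyap_stable F e \<longleftrightarrow> (\<forall>\<epsilon>>0. \<exists>\<delta>>0. \<forall>T w. ode_sol_on F T w \<and> norm (w 0 - e) < \<delta> \<longrightarrow>
      (\<forall>t\<in>{0..T}. norm (w t - e) < \<epsilon>))"

definition asympt_stable :: "('a::real_normed_vector \<Rightarrow> 'a) \<Rightarrow> 'a \<Rightarrow> bool" where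
  "asympt_stable F e \<longleftrightarrow> lyap_stable F e \<and>
     (\<exists>\<delta>>0. \<forall>w. ode_sol F w \<and> norm (w 0 - e) < \<delta> \<longrightarrow> (w \<longlongrightarrow> e) at_top)"

definition glob_stable :: "('a::real_normed_vector \<Rightarrow> 'a) \<Rightarrow> 'a \<Rightarrow> bool" where
  "glob_stable F e \<longleftrightarrow> lyap_stable F e \<and>
     (\<forall>w0. \<exists>B. \<forall>T w. ode_sol_on F T w \<and> w 0 = w0 \<longrightarrow> (\<forall>t\<in>{0..T}. norm (w t) \<le> B))"

definition glob_asympt_stable :: "('a::real_normed_vector \<Rightarrow> 'a) \<Rightarrow> 'a \<Rightarrow> bool" where
  "glob_asympt_stable F e \<longleftrightarrow> lyap_stable F e \<and>
     (\<forall>w. ode_sol F w \<longrightarrow> (w \<longlongrightarrow> e) at_top)"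

definition detectable :: "('a::real_normed_vector \<Rightarrow> 'a) \<Rightarrow> ('a \<Rightarrow> 'b::zero) \<Rightarrow> 'a \<Rightarrow> bool" where
  "detectable F Y e \<longleftrightarrow>
     (\<forall>w. ode_sol F w \<and> (\<forall>t\<ge>0. Y (w t) = 0) \<longrightarrow> (w \<longlongrightarrow> e) at_top)"

definition radially_unbounded :: "('a::real_normed_vector \<Rightarrow> real) \<Rightarrow> bool" where
  "radially_unbounded H \<longleftrightarrow> filterlim H at_top at_infinity"

end

theory Submission
  imports Defs "HOL-Complex_Analysis.Great_Picard"
begin

lemma V_mono_gen:
  fixes F :: "'a::real_normed_vector \<Rightarrow> 'a" and V :: "'a \<Rightarrow> real"
  assumes Vder: "\<And>p. (V has_derivative DV p) (at p)"
    and Vle: "\<And>p. DV p (F p) \<le> 0"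
    and sol: "\<And>t. t \<in> {a..b} \<Longrightarrow> (w has_vector_derivative F (w t)) (at t within S)"
    and sub: "{a..b} \<subseteq> S" and ab: "a \<le> b"
  shows "V (w b) \<le> V (w a)"
proof -
  have d: "((\<lambda>t. V (w t)) has_derivative (\<lambda>h. DV (w t) (h *\<^sub>R F (w t)))) (at t within {a..b})"
    if "a \<le> t" "t \<le> b" for t
  proof -
    have "(w has_vector_derivative F (w t)) (at t within {a..b})"
      using sol[of t] that has_vector_derivative_within_subset[OF _ sub] by auto
    then have "(w has_derivative (\<lambda>h. h *\<^sub>R F (w t))) (at t within {a..b})"
      by (simp add: has_vector_derivative_def)
    from has_derivative_compose[OF this Vder] show ?thesis .
  qed
  from mvt_very_simple[OF ab d] obtain x where x: "x \<in> {a..b}"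
    and eq: "V (w b) - V (w a) = DV (w x) ((b - a) *\<^sub>R F (w x))" by auto
  interpret bounded_linear "DV (w x)" using Vder[of "w x"] by (rule has_derivative_bounded_linear)
  have "DV (w x) ((b - a) *\<^sub>R F (w x)) = (b - a) * DV (w x) (F (w x))" by (simp add: scaleR)
  also have "\<dots> \<le> 0" using ab Vle[of "w x"] by (simp add: mult_nonneg_nonpos)
  finally show ?thesis using eq by simp
qed

lemma lyap_from_V:
  fixes F :: "'a::euclidean_space \<Rightarrow> 'a" and V :: "'a \<Rightarrow> real"
  assumes Vder: "\<And>p. (V has_derivative DV p) (at p)"
    and Vle: "\<And>p. DV p (F p) \<le> 0"
    and pos: "\<exists>r>0. \<forall>p. 0 < norm (p - e) \<and> norm (p - e) < r \<longrightarrow> V e < V p"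
  shows "lyap_stable F e"
  unfolding lyap_stable_def
proof (intro allI impI)
  fix \<epsilon> :: real assume "\<epsilon> > 0"
  obtain r where r: "r > 0" "\<forall>p. 0 < norm (p - e) \<and> norm (p - e) < r \<longrightarrow> V e < V p"
    using pos by auto
  define \<epsilon>' where "\<epsilon>' = min \<epsilon> (r/2)"
  have e': "\<epsilon>' > 0" "\<epsilon>' \<le> \<epsilon>" "\<epsilon>' < r" using \<open>\<epsilon>>0\<close> r by (auto simp: \<epsilon>'_def)
  have contV: "continuous_on UNIV V"
    using Vder by (meson continuous_on_eq_continuous_within has_derivative_continuous)
  have Sne: "sphere e \<epsilon>' \<noteq> {}" using e' by simp
  obtain q where q: "q \<in> sphere e \<epsilon>'" "\<forall>p\<in>sphere e \<epsilon>'. V q \<le> V p"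
    using continuous_attains_inf[OF compact_sphere Sne continuous_on_subset[OF contV]] by blast
  define m where "m = V q - V e"
  have "m > 0" using r(2)[rule_format, of q] q(1) e' by (auto simp: m_def dist_norm norm_minus_commute)
  have "isCont V e" using contV by (simp add: continuous_on_eq_continuous_at)
  then obtain d where d: "d > 0" "\<forall>p. dist p e < d \<longrightarrow> dist (V p) (V e) < m"
    using \<open>m>0\<close> unfolding continuous_at_eps_delta by blast
  show "\<exists>\<delta>>0. \<forall>T w. ode_sol_on F T w \<and> norm (w 0 - e) < \<delta> \<longrightarrow> (\<forall>t\<in>{0..T}. norm (w t - e) < \<epsilon>)"
  proof (intro exI[of _ "min d \<epsilon>'"] conjI allI impI ballI)
    show "min d \<epsilon>' > 0" using d e' by simp
    fix T w t assume H: "ode_sol_on F T w \<and> norm (w 0 - e) < min d \<epsilon>'" and t: "t \<in> {0..T}"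
    have sol: "\<And>t. t \<in> {0..T} \<Longrightarrow> (w has_vector_derivative F (w t)) (at t within {0..T})"
      using H by (simp add: ode_sol_on_def)
    have contw: "continuous_on {0..T} w"
      using sol by (meson continuous_on_eq_continuous_within has_vector_derivative_continuous)
    have V0: "V (w 0) < V e + m" using d(2)[rule_format, of "w 0"] H by (auto simp: dist_norm)
    have "norm (w t - e) < \<epsilon>'"
    proof (rule ccontr)
      assume "\<not> ?thesis"
      then have ge: "norm (w t - e) \<ge> \<epsilon>'" by simp
      have c: "continuous_on {0..t} (\<lambda>\<tau>. norm (w \<tau> - e))"
        using continuous_on_subset[OF contw] t by (auto intro!: continuous_intros)
      have "norm (w 0 - e) \<le> \<epsilon>'" using H by simp
      then obtain \<tau> where \<tau>: "\<tau> \<in> {0..t}" "norm (w \<tau> - e) = \<epsilon>'"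
        using IVT'[of "\<lambda>\<tau>. norm (w \<tau> - e)" 0 \<epsilon>' t] ge c t by auto
      have "V (w \<tau>) \<le> V (w 0)"
        by (rule V_mono_gen[OF Vder Vle sol, of 0 \<tau>]) (use \<tau> t in auto)
      moreover have "V q \<le> V (w \<tau>)" using q(2) \<tau> by (auto simp: dist_norm norm_minus_commute)
      ultimately show False using V0 by (simp add: m_def)
    qed
    then show "norm (w t - e) < \<epsilon>" using e' by simp
  qed
qed

lemma shift_sol:
  assumes sol: "ode_sol F w" and c: "c \<ge> 0"
  shows "ode_sol_on F T (\<lambda>\<tau>. w (c + \<tau>))"
  unfolding ode_sol_on_def
proof
  fix \<tau> assume \<tau>: "\<tau> \<in> {0..T}"
  have "(w has_vector_derivative F (w (c + \<tau>))) (at (c + \<tau>) within {0..})"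
    using sol \<tau> c by (simp add: ode_sol_def)
  then have d1: "(w has_vector_derivative F (w (c + \<tau>))) (at ((\<lambda>\<tau>. c + \<tau>) \<tau>) within (\<lambda>\<tau>. c + \<tau>) ` {0..T})"
    by (rule has_vector_derivative_within_subset) (use c in auto)
  have d2: "((\<lambda>\<tau>. c + \<tau>) has_vector_derivative 1) (at \<tau> within {0..T})"
    by (auto intro!: derivative_eq_intros)
  from vector_diff_chain_within[OF d2 d1] show "((\<lambda>\<tau>. w (c + \<tau>)) has_vector_derivative F (w (c + \<tau>))) (at \<tau> within {0..T})"
    by (simp add: o_def)
qed

lemma sol_restrict:
  assumes sol: "ode_sol F w" shows "ode_sol_on F T w"
  unfolding ode_sol_on_def
proof
  fix t assume t: "t \<in> {0..T}"
  have "(w has_vector_derivative F (w t)) (at t within {0..})"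
    using sol t by (simp add: ode_sol_def)
  then show "(w has_vector_derivative F (w t)) (at t within {0..T})"
    by (rule has_vector_derivative_within_subset) auto
qed

lemma lasalle_gen:
  fixes F :: "'a::euclidean_space \<Rightarrow> 'a" and V :: "'a \<Rightarrow> real"
  assumes contF: "continuous_on UNIV F"
    and Vder: "\<And>p. (V has_derivative DV p) (at p)"
    and Vle: "\<And>p. DV p (F p) \<le> 0"
    and stab: "lyap_stable F e"
    and det: "\<And>y. ode_sol F y \<Longrightarrow> (\<And>t. t \<ge> 0 \<Longrightarrow> DV (y t) (F (y t)) = 0) \<Longrightarrow> (y \<longlongrightarrow> e) at_top"
    and sol: "ode_sol F w" and K: "compact K" and inK: "\<And>t. t \<ge> 0 \<Longrightarrow> w t \<in> K"
  shows "(w \<longlongrightarrow> e) at_top"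
proof -
  have contV: "continuous_on UNIV V"
    using Vder by (meson continuous_on_eq_continuous_within has_derivative_continuous)
  have wd: "\<And>t. t \<ge> 0 \<Longrightarrow> (w has_vector_derivative F (w t)) (at t within {0..})"
    using sol by (simp add: ode_sol_def)
  obtain M where M: "M > 0" "\<forall>p\<in>K. norm (F p) \<le> M"
    using compact_imp_bounded[OF compact_continuous_image[OF continuous_on_subset[OF contF] K]]
    unfolding bounded_pos by auto
  obtain BK where BK: "BK > 0" "\<forall>p\<in>K. norm p \<le> BK"
    using compact_imp_bounded[OF K] unfolding bounded_pos by auto
  have lip: "norm (w a - w b) \<le> M * \<bar>a - b\<bar>" if "a \<ge> 0" "b \<ge> 0" for a b
  proof -
    have "norm (w a - w b) \<le> M * norm (a - b)"
    proof (rule differentiable_bound[of "{0..}" w "\<lambda>t h. h *\<^sub>R F (w t)"])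
      show "convex {0::real..}" by (simp add: convex_real_interval)
      show "(w has_derivative (\<lambda>h. h *\<^sub>R F (w x))) (at x within {0..})" if "x \<in> {0..}" for x
        using wd[of x] that by (simp add: has_vector_derivative_def)
      show "onorm (\<lambda>h. h *\<^sub>R F (w x)) \<le> M" if "x \<in> {0..}" for x
      proof (rule onorm_le)
        fix h :: real
        have "norm (F (w x)) \<le> M" using M inK[of x] that by auto
        then show "norm (h *\<^sub>R F (w x)) \<le> M * norm h"
          by (simp add: mult.commute[of M] mult_left_mono)
      qed
    qed (use that in auto)
    then show ?thesis by simp
  qed
  have KL: "\<exists>\<delta>>0. \<forall>a b. a \<ge> 0 \<longrightarrow> b \<ge> 0 \<longrightarrow> \<bar>b - a\<bar> < \<delta> \<longrightarrow>
      norm (w b - w a - (b - a) *\<^sub>R F (w a)) \<le> \<epsilon> * \<bar>b - a\<bar>" if eps: "\<epsilon> > 0" for \<epsilon>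
  proof -
    have "uniformly_continuous_on K F"
      by (rule compact_uniformly_continuous[OF continuous_on_subset[OF contF] K]) simp
    then obtain d where d: "d > 0" "\<forall>x\<in>K. \<forall>x'\<in>K. dist x' x < d \<longrightarrow> dist (F x') (F x) < \<epsilon>"
      using eps unfolding uniformly_continuous_on_def by blast
    show ?thesis
    proof (intro exI[of _ "d / M"] conjI allI impI)
      show "d / M > 0" using d M by simp
      fix a b :: real assume ab: "a \<ge> 0" "b \<ge> 0" "\<bar>b - a\<bar> < d / M"
      have segsub: "closed_segment a b \<subseteq> {0..}"
        using ab by (auto simp: closed_segment_eq_real_ivl split: if_splits)
      have "norm (w b - w a - (b - a) *\<^sub>R F (w a)) \<le> norm (b - a) * \<epsilon>"
      proof (rule vector_differentiable_bound_linearization[of "closed_segment a b" w "\<lambda>t. F (w t)"])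
        show "(w has_vector_derivative F (w x)) (at x within closed_segment a b)"
          if "x \<in> closed_segment a b" for x
          using wd[of x] segsub that by (auto intro: has_vector_derivative_within_subset)
        show "norm (F (w x) - F (w a)) \<le> \<epsilon>" if x: "x \<in> closed_segment a b" for x
        proof -
          have x0: "x \<ge> 0" using x segsub by auto
          have "\<bar>x - a\<bar> \<le> \<bar>b - a\<bar>" using x
            by (auto simp: closed_segment_eq_real_ivl split: if_splits)
          then have "norm (w x - w a) \<le> M * \<bar>b - a\<bar>"
            using lip[OF x0 ab(1)] M by (meson mult_left_mono less_imp_le order_trans)
          also have "\<dots> < d" using ab(3) M by (simp add: field_simps)
          finally have "dist (w x) (w a) < d" by (simp add: dist_norm)
          then have "dist (F (w x)) (F (w a)) < \<epsilon>" using d(2) inK x0 ab by blast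
          then show ?thesis by (simp add: dist_norm)
        qed
      qed auto
      then show "norm (w b - w a - (b - a) *\<^sub>R F (w a)) \<le> \<epsilon> * \<bar>b - a\<bar>" by (simp add: mult.commute)
    qed
  qed
  have mono: "V (w b) \<le> V (w a)" if "0 \<le> a" "a \<le> b" for a b
    by (rule V_mono_gen[OF Vder Vle, where a=a and b=b and S="{0..}"]) (use that wd in auto)
  obtain BV where BV: "\<forall>p\<in>K. \<bar>V p\<bar> \<le> BV"
    using compact_imp_bounded[OF compact_continuous_image[OF continuous_on_subset[OF contV] K]]
    unfolding bounded_iff by auto
  define L where "L = Inf ((\<lambda>t. V (w t)) ` {0..})"
  have bddb: "bdd_below ((\<lambda>t. V (w t)) ` {0..})"
    using BV inK by (auto intro!: bdd_belowI[of _ "-BV"] simp: abs_le_iff) (smt (verit) inK)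
  have VgeL: "L \<le> V (w t)" if "t \<ge> 0" for t
    unfolding L_def by (rule cInf_lower) (use that bddb in auto)
  have VL: "((\<lambda>t. V (w t)) \<longlongrightarrow> L) at_top"
  proof (rule order_tendstoI)
    fix a assume "a < L"
    show "eventually (\<lambda>t. a < V (w t)) at_top"
      using eventually_ge_at_top[of "0::real"] by (rule eventually_mono) (use VgeL \<open>a < L\<close> in force)
  next
    fix a assume "L < a"
    then obtain t0 where t0: "t0 \<ge> 0" "V (w t0) < a"
      unfolding L_def by (subst (asm) cInf_less_iff) (use bddb in auto)
    show "eventually (\<lambda>t. V (w t) < a) at_top"
      using eventually_ge_at_top[of t0]
      by (rule eventually_mono) (use mono t0 in fastforce)
  qed
  define P where "P = (\<lambda>(i::nat) (r::nat \<Rightarrow> nat). \<forall>s\<in>{0..real i}. convergent (\<lambda>n. w (real (r n) + s)))"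
  obtain k where k: "strict_mono (k :: nat \<Rightarrow> nat)" "\<And>i. P i (id \<circ> k)"
  proof (rule subsequence_diagonalization_lemma[of P id])
    fix i and r :: "nat \<Rightarrow> nat"
    have "\<exists>g k. strict_mono (k::nat\<Rightarrow>nat) \<and> (\<forall>e>0. \<exists>N. \<forall>n x. n \<ge> N \<and> x \<in> {0..real i} \<longrightarrow>
            norm (w (real (r (k n)) + x) - g x) < e)"
    proof (rule Arzela_Ascoli[of "{0..real i}" "\<lambda>n x. w (real (r n) + x)" BK])
      show "norm (w (real (r n) + x)) \<le> BK" if "x \<in> {0..real i}" for n x
        using BK inK[of "real (r n) + x"] that by auto
      show "\<exists>d>0. \<forall>n y. y \<in> {0..real i} \<and> norm (x - y) < d \<longrightarrow> norm (w (real (r n) + x) - w (real (r n) + y)) < e"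
        if "x \<in> {0..real i}" "0 < e" for x e
      proof (intro exI[of _ "e / M"] conjI allI impI)
        show "e / M > 0" using that M by simp
        fix n y assume y: "y \<in> {0..real i} \<and> norm (x - y) < e / M"
        have "norm (w (real (r n) + x) - w (real (r n) + y)) \<le> M * \<bar>x - y\<bar>"
          using lip[of "real (r n) + x" "real (r n) + y"] that y by auto
        also have "\<dots> < e" using y M by (simp add: field_simps)
        finally show "norm (w (real (r n) + x) - w (real (r n) + y)) < e" .
      qed
    qed (simp | blast)+
    then obtain g kk where gk: "strict_mono (kk::nat\<Rightarrow>nat)" "\<forall>e>0. \<exists>N. \<forall>n x. n \<ge> N \<and> x \<in> {0..real i} \<longrightarrow>
            norm (w (real (r (kk n)) + x) - g x) < e" by blast
    have "P i (r \<circ> kk)" unfolding P_def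
    proof
      fix s assume s: "s \<in> {0..real i}"
      have "(\<lambda>n. w (real (r (kk n)) + s)) \<longlonglongrightarrow> g s"
      proof (rule LIMSEQ_I)
        fix e :: real assume "e > 0"
        then obtain N where "\<forall>n x. n \<ge> N \<and> x \<in> {0..real i} \<longrightarrow> norm (w (real (r (kk n)) + x) - g x) < e"
          using gk(2) by blast
        then show "\<exists>N. \<forall>n\<ge>N. norm (w (real (r (kk n)) + s) - g s) < e" using s by blast
      qed
      then show "convergent (\<lambda>n. w (real ((r \<circ> kk) n) + s))" by (auto simp: convergent_def)
    qed
    then show "\<exists>k. strict_mono k \<and> P i (r \<circ> k)" using gk(1) by blast
  next
    fix i and r :: "nat \<Rightarrow> nat" and k1 k2 :: "nat \<Rightarrow> nat" and N
    assume P1: "P i (r \<circ> k1)" and kk: "\<And>j. N \<le> j \<Longrightarrow> \<exists>j'. j \<le> j' \<and> k2 j = k1 j'"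
    show "P i (r \<circ> k2)" unfolding P_def
    proof
      fix s assume s: "s \<in> {0..real i}"
      have "convergent (\<lambda>n. w (real ((r \<circ> k1) n) + s))" using P1 s unfolding P_def by blast
      then obtain l where l: "(\<lambda>n. w (real (r (k1 n)) + s)) \<longlonglongrightarrow> l"
        unfolding convergent_def by auto
      have "(\<lambda>n. w (real (r (k2 n)) + s)) \<longlonglongrightarrow> l"
      proof (rule LIMSEQ_I)
        fix e :: real assume "e > 0"
        then obtain N0 where N0: "\<forall>n\<ge>N0. norm (w (real (r (k1 n)) + s) - l) < e"
          using LIMSEQ_D[OF l] by blast
        show "\<exists>N. \<forall>n\<ge>N. norm (w (real (r (k2 n)) + s) - l) < e"
        proof (intro exI[of _ "max N N0"] allI impI)
          fix j assume "max N N0 \<le> j"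
          then obtain j' where "j \<le> j'" "k2 j = k1 j'" using kk[of j] by auto
          then show "norm (w (real (r (k2 j)) + s) - l) < e" using N0 \<open>max N N0 \<le> j\<close> by auto
        qed
      qed
      then show "convergent (\<lambda>n. w (real ((r \<circ> k2) n) + s))" by (auto simp: convergent_def)
    qed
  qed blast
  define y where "y s = lim (\<lambda>n. w (real (k n) + s))" for s
  have ylim: "(\<lambda>n. w (real (k n) + s)) \<longlonglongrightarrow> y s" if "s \<ge> 0" for s
  proof -
    have "s \<in> {0..real (nat \<lceil>s\<rceil>)}" using that by (simp add: real_nat_ceiling_ge)
    then have "convergent (\<lambda>n. w (real (k n) + s))" using k(2)[of "nat \<lceil>s\<rceil>"] by (simp add: P_def)
    then show ?thesis by (simp add: y_def convergent_LIMSEQ_iff)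
  qed
  have kinf: "filterlim (\<lambda>n. real (k n) + s) at_top sequentially" for s
  proof -
    have "filterlim (\<lambda>n. real (k n)) at_top sequentially"
      using filterlim_compose[OF filterlim_real_sequentially filterlim_subseq[OF k(1)]] by (simp add: o_def)
    then show ?thesis
      using filterlim_tendsto_add_at_top[OF tendsto_const[of s]] by (simp add: add.commute)
  qed
  have yK: "y s \<in> K" if "s \<ge> 0" for s
    by (rule closed_sequentially[OF compact_imp_closed[OF K] _ ylim[OF that]])
       (use that inK in auto)
  have VyL: "V (y s) = L" if "s \<ge> 0" for s
  proof -
    have "(\<lambda>n. V (w (real (k n) + s))) \<longlonglongrightarrow> V (y s)"
      using isCont_tendsto_compose[OF _ ylim[OF that], of V] contV
      by (simp add: continuous_on_eq_continuous_at)
    moreover have "(\<lambda>n. V (w (real (k n) + s))) \<longlonglongrightarrow> L"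
      using filterlim_compose[OF VL kinf[of s]] by (simp add: o_def)
    ultimately show ?thesis using LIMSEQ_unique by blast
  qed
  have yd: "(y has_vector_derivative F (y s)) (at s within {0..})" if s0: "s \<ge> 0" for s
    unfolding has_vector_derivative_def has_derivative_within_alt
  proof (intro conjI allI impI)
    show "bounded_linear (\<lambda>h. h *\<^sub>R F (y s))" by (rule bounded_linear_scaleR_left)
    fix \<epsilon> :: real assume "\<epsilon> > 0"
    then obtain \<delta> where \<delta>: "\<delta> > 0" "\<forall>a b. a \<ge> 0 \<longrightarrow> b \<ge> 0 \<longrightarrow> \<bar>b - a\<bar> < \<delta> \<longrightarrow>
      norm (w b - w a - (b - a) *\<^sub>R F (w a)) \<le> \<epsilon> * \<bar>b - a\<bar>" using KL by blast
    show "\<exists>d>0. \<forall>t\<in>{0..}. norm (t - s) < d \<longrightarrow> norm (y t - y s - (t - s) *\<^sub>R F (y s)) \<le> \<epsilon> * norm (t - s)"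
    proof (intro exI[of _ \<delta>] conjI ballI impI)
      show "\<delta> > 0" by fact
      fix t :: real assume t: "t \<in> {0..}" "norm (t - s) < \<delta>"
      have lim: "(\<lambda>n. norm (w (real (k n) + t) - w (real (k n) + s) - (t - s) *\<^sub>R F (w (real (k n) + s))))
          \<longlonglongrightarrow> norm (y t - y s - (t - s) *\<^sub>R F (y s))"
      proof (intro tendsto_intros ylim)
        show "(\<lambda>n. F (w (real (k n) + s))) \<longlonglongrightarrow> F (y s)"
          using isCont_tendsto_compose[OF _ ylim[OF s0], of F] contF
          by (simp add: continuous_on_eq_continuous_at)
      qed (use t s0 in auto)
      show "norm (y t - y s - (t - s) *\<^sub>R F (y s)) \<le> \<epsilon> * norm (t - s)"
      proof (rule LIMSEQ_le_const2[OF lim], intro exI allI impI)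
        fix n
        have "norm (w (real (k n) + t) - w (real (k n) + s) - ((real (k n) + t) - (real (k n) + s)) *\<^sub>R F (w (real (k n) + s)))
              \<le> \<epsilon> * \<bar>(real (k n) + t) - (real (k n) + s)\<bar>"
          using \<delta>(2)[rule_format, of "real (k n) + s" "real (k n) + t"] t s0 by auto
        then show "norm (w (real (k n) + t) - w (real (k n) + s) - (t - s) *\<^sub>R F (w (real (k n) + s))) \<le> \<epsilon> * norm (t - s)"
          by simp
      qed
    qed
  qed
  have ysol: "ode_sol F y" using yd by (simp add: ode_sol_def)
  have DV0: "DV (y s) (F (y s)) = 0" if s0: "s \<ge> 0" for s
  proof -
    interpret bl: bounded_linear "DV (y s)" using Vder[of "y s"] by (rule has_derivative_bounded_linear)
    have "((\<lambda>t. V (y t)) has_derivative (\<lambda>h. DV (y s) (h *\<^sub>R F (y s)))) (at s within {0..})"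
      using has_derivative_compose[OF yd[OF s0, unfolded has_vector_derivative_def] Vder] .
    then have d1: "((\<lambda>t. V (y t)) has_vector_derivative DV (y s) (F (y s))) (at s within {0..})"
      by (simp add: has_vector_derivative_def bl.scaleR)
    have "((\<lambda>t. L) has_vector_derivative 0) (at s within {0..})" by (rule has_vector_derivative_const)
    then have d2: "((\<lambda>t. V (y t)) has_vector_derivative 0) (at s within {0..})"
      unfolding has_vector_derivative_def
      by (rule has_derivative_transform_within[of _ _ _ _ 1]) (use s0 VyL in auto)
    have "at s within {0..} \<noteq> bot"
    proof
      assume "at s within {0..} = bot"
      moreover have "at_right s \<le> at s within {0..}" by (rule at_le) (use s0 in auto)
      ultimately show False using trivial_limit_at_right_real[of s] by (simp add: bot_unique)
    qed
    from vector_derivative_unique_within[OF this d1 d2] show ?thesis .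
  qed
  have ye: "(y \<longlongrightarrow> e) at_top" by (rule det[OF ysol DV0])
  show ?thesis
  proof (rule tendstoI)
    fix \<epsilon> :: real assume "\<epsilon> > 0"
    then obtain \<delta> where \<delta>: "\<delta> > 0" "\<forall>T w. ode_sol_on F T w \<and> norm (w 0 - e) < \<delta> \<longrightarrow> (\<forall>t\<in>{0..T}. norm (w t - e) < \<epsilon>)"
      using stab unfolding lyap_stable_def by blast
    have h2: "\<delta>/2 > 0" using \<delta>(1) by simp
    have ev1: "eventually (\<lambda>s. dist (y s) e < \<delta>/2) at_top" using tendstoD[OF ye h2] .
    have "eventually (\<lambda>s. dist (y s) e < \<delta>/2 \<and> s \<ge> 0) at_top"
      using eventually_conj[OF ev1 eventually_ge_at_top[of "0::real"]] .
    then obtain s where s: "dist (y s) e < \<delta>/2" "s \<ge> 0"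
      unfolding eventually_at_top_linorder by blast
    have "eventually (\<lambda>n. dist (w (real (k n) + s)) (y s) < \<delta>/2) sequentially"
      using tendstoD[OF ylim[OF s(2)] h2] .
    then obtain n where n: "dist (w (real (k n) + s)) (y s) < \<delta>/2"
      unfolding eventually_sequentially by blast
    define c where "c = real (k n) + s"
    have c0: "c \<ge> 0" using s by (simp add: c_def)
    have wc: "norm (w c - e) < \<delta>"
      using n s(1) dist_triangle[of "w c" e "y s"] by (simp add: c_def dist_norm)
    have "dist (w t) e < \<epsilon>" if "t \<ge> c" for t
    proof -
      have "ode_sol_on F (t - c) (\<lambda>\<tau>. w (c + \<tau>))" by (rule shift_sol[OF sol c0])
      then have "norm (w (c + (t - c)) - e) < \<epsilon>" using \<delta>(2)[rule_format, of "t - c" "\<lambda>\<tau>. w (c + \<tau>)" "t - c"] wc that by simp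
      then show ?thesis by (simp add: dist_norm)
    qed
    then show "eventually (\<lambda>t. dist (w t) e < \<epsilon>) at_top"
      unfolding eventually_at_top_linorder by blast
  qed
qed

lemma smooth_fun_cont: "smooth_fun f \<Longrightarrow> continuous_on UNIV f"
  unfolding smooth_fun_def by blast

lemma smooth_mat_cont:
  assumes "smooth_mat A" shows "continuous_on UNIV A"
proof -
  have "continuous_on UNIV (\<lambda>x. \<chi> i. \<chi> j. A x $ i $ j)"
    using assms unfolding smooth_mat_def
    by (intro continuous_on_vec_lambda) (simp add: smooth_fun_cont)
  then show ?thesis by simp
qed

lemma cont_mv[continuous_intros]:
  fixes A :: "'a::topological_space \<Rightarrow> real^'n^'m"
  assumes "continuous_on S A" "continuous_on S v"
  shows "continuous_on S (\<lambda>x. A x *v v x)"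
  unfolding matrix_vector_mult_def
  by (intro continuous_intros assms)

lemma cont_transpose[continuous_intros]:
  fixes A :: "'a::topological_space \<Rightarrow> real^'n^'m"
  assumes "continuous_on S A"
  shows "continuous_on S (\<lambda>x. transpose (A x))"
  unfolding transpose_def by (intro continuous_intros assms)

lemma cont_xa[continuous_intros]:
  assumes "continuous_on S f" shows "continuous_on S (\<lambda>x. xa_of (f x))"
  unfolding xa_of_def by (intro continuous_intros assms)
lemma cont_xu[continuous_intros]:
  assumes "continuous_on S f" shows "continuous_on S (\<lambda>x. xu_of (f x))"
  unfolding xu_of_def by (intro continuous_intros assms)
lemma cont_blk_aa[continuous_intros]:
  assumes "continuous_on S f" shows "continuous_on S (\<lambda>x. blk_aa (f x))"
  unfolding blk_aa_def by (intro continuous_intros assms)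
lemma cont_blk_au[continuous_intros]:
  assumes "continuous_on S f" shows "continuous_on S (\<lambda>x. blk_au (f x))"
  unfolding blk_au_def by (intro continuous_intros assms)
lemma cont_col[continuous_intros]:
  assumes "continuous_on S a" "continuous_on S b" shows "continuous_on S (\<lambda>x. col_au (a x) (b x))"
  unfolding col_au_def
proof (intro continuous_on_vec_lambda)
  fix k :: "'b + 'c"
  show "continuous_on S (\<lambda>x. case k of Inl i \<Rightarrow> a x $ i | Inr j \<Rightarrow> b x $ j)"
    by (cases k) (auto intro!: continuous_intros assms)
qed

lemma sum_Plus_UNIV: "(\<Sum>k\<in>(UNIV::('a::finite + 'b::finite) set). f k) = (\<Sum>i\<in>UNIV. f (Inl i)) + (\<Sum>j\<in>UNIV. f (Inr j))"
proof -
  have "(\<Sum>k\<in>(UNIV::('a + 'b) set). f k) = (\<Sum>k\<in>(UNIV <+> UNIV). f k)" by simp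
  also have "\<dots> = (\<Sum>i\<in>UNIV. f (Inl i)) + (\<Sum>j\<in>UNIV. f (Inr j))"
    by (subst sum.Plus) (auto simp: o_def)
  finally show ?thesis .
qed

lemma inner_split: "(g::real^('m::finite+'s::finite)) \<bullet> v = xa_of g \<bullet> xa_of v + xu_of g \<bullet> xu_of v"
  unfolding inner_vec_def xa_of_def xu_of_def by (simp add: sum_Plus_UNIV)

lemma xa_mv: "xa_of (A *v g) = blk_aa A *v xa_of g + blk_au A *v xu_of g"
  unfolding xa_of_def xu_of_def blk_aa_def blk_au_def matrix_vector_mult_def
  by (simp add: vec_eq_iff sum_Plus_UNIV)

lemma xa_col[simp]: "xa_of (col_au a b) = a" by (simp add: xa_of_def col_au_def vec_eq_iff)
lemma xu_col[simp]: "xu_of (col_au a b) = b" by (simp add: xu_of_def col_au_def vec_eq_iff)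
lemma xa_add[simp]: "xa_of (a + b) = xa_of a + xa_of b" by (simp add: xa_of_def vec_eq_iff)
lemma xa_diff[simp]: "xa_of (a - b) = xa_of a - xa_of b" by (simp add: xa_of_def vec_eq_iff)
lemma xu_add[simp]: "xu_of (a + b) = xu_of a + xu_of b" by (simp add: xu_of_def vec_eq_iff)
lemma xu_diff[simp]: "xu_of (a - b) = xu_of a - xu_of b" by (simp add: xu_of_def vec_eq_iff)
lemma xa_zero[simp]: "xa_of 0 = 0" by (simp add: xa_of_def vec_eq_iff)
lemma xu_zero[simp]: "xu_of 0 = 0" by (simp add: xu_of_def vec_eq_iff)
lemma col_split: "g = col_au (xa_of g) 0 + col_au 0 (xu_of g)"
  by (simp add: vec_eq_iff col_au_def xa_of_def xu_of_def split: sum.splits)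
lemma mv_uminus: "(- A) *v v = - (A *v (v::real^'n))"
  by (simp add: vec_eq_iff matrix_vector_mult_def sum_negf)
lemma mv_scaleR_mat: "(c *\<^sub>R A) *v v = c *\<^sub>R (A *v (v::real^'n))"
  by (simp add: vec_eq_iff matrix_vector_mult_def sum_distrib_left mult.assoc)

lemma skew_quad: "transpose (A::real^'n^'n) = - A \<Longrightarrow> v \<bullet> (A *v v) = (0::real)"
proof -
  assume a: "transpose A = - A"
  have "v \<bullet> (A *v v) = (v v* A) \<bullet> v" by (rule dot_lmul_matrix[symmetric])
  also have "v v* A = transpose A *v v" by simp
  also have "\<dots> = - (A *v v)" using a by (simp add: mv_uminus)
  finally show ?thesis by (simp add: inner_commute)
qed

lemma sym_swap: "transpose (A::real^'n^'n) = A \<Longrightarrow> (u::real^'n) \<bullet> (A *v v) = v \<bullet> (A *v u)"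
proof -
  assume a: "transpose A = A"
  have "u \<bullet> (A *v v) = (u v* A) \<bullet> v" by (rule dot_lmul_matrix[symmetric])
  also have "u v* A = transpose A *v u" by simp
  finally show ?thesis using a by (simp add: inner_commute)
qed

lemma Jc1_Rc1: "Jc1 Gd x - Rc1 Gd x = Gd x"
proof -
  have "Jc1 Gd x - Rc1 Gd x = (1/2) *\<^sub>R (Gd x - transpose (Gd x)) + (1/2) *\<^sub>R (Gd x + transpose (Gd x))"
    by (simp add: Jc1_def Rc1_def)
  also have "\<dots> = (1/2 + 1/2) *\<^sub>R Gd x" by (simp only: scaleR_add_right scaleR_diff_right scaleR_add_left) simp
  finally show ?thesis by simp
qed

lemma Jc1_Rc1_mv: "Jc1 Gd x *v v - Rc1 Gd x *v v = Gd x *v v"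
  by (metis Jc1_Rc1 matrix_vector_mult_diff_rdistrib)

lemma snd_cl:
  assumes Kw: "Ki *v wb = dbar"
  shows "snd (closed_loop J R Gd dbar Ki Rc2 gradH p) =
     Gd (fst p) *v (xa_of (gradH (fst p)) + Ki *v (snd p - wb))"
proof -
  obtain x c where p: "p = (x, c)" by (cases p)
  let ?g = "gradH x"
  have u: "control_u J R Gd Ki Rc2 gradH x (xa_of x - c) =
     - (blk_aa (J x) *v xa_of ?g) + blk_aa (R x) *v xa_of ?g + Gd x *v xa_of ?g - Rc2 *v xa_of ?g
     + Gd x *v (Ki *v c) + 2 *\<^sub>R (blk_au (R x) *v xu_of ?g)"
  proof -
    have "(- blk_aa (J x) + blk_aa (R x) + Jc1 Gd x - Rc1 Gd x - Rc2) = (- blk_aa (J x) + blk_aa (R x) + (Jc1 Gd x - Rc1 Gd x) - Rc2)"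
      by simp
    then show ?thesis unfolding control_u_def
      by (simp add: Jc1_Rc1 Jc1_Rc1_mv matrix_vector_mult_add_rdistrib matrix_vector_mult_diff_rdistrib mv_uminus)
  qed
  have xd: "xa_of ((J x - R x) *v ?g) = blk_aa (J x) *v xa_of ?g + blk_au (J x) *v xu_of ?g
     - blk_aa (R x) *v xa_of ?g - blk_au (R x) *v xu_of ?g"
    by (simp add: matrix_vector_mult_diff_rdistrib xa_mv)
  show ?thesis
    unfolding p closed_loop_def Let_def plant_field_def controller_field_def
    using Kw
    by (simp add: u xd xa_mv matrix_vector_mult_add_rdistrib matrix_vector_mult_diff_rdistrib
        matrix_vector_right_distrib matrix_vector_mult_diff_distrib algebra_simps scaleR_2)
qed

lemma quad_q: "col_au a 0 \<bullet> (A *v col_au a 0) = a \<bullet> (blk_aa A *v a)"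
  by (subst inner_split) (simp add: xa_mv)

lemma cross_q: "col_au a 0 \<bullet> (A *v col_au 0 b) = a \<bullet> (blk_au A *v b)"
  by (subst inner_split) (simp add: xa_mv)

lemma quad_split:
  fixes A :: "real^('m::finite+'s::finite)^('m+'s)"
  assumes sym: "transpose A = A"
  shows "g \<bullet> (A *v g) = xa_of g \<bullet> (blk_aa A *v xa_of g) + 2 * (xa_of g \<bullet> (blk_au A *v xu_of g))
     + col_au 0 (xu_of g) \<bullet> (A *v col_au 0 (xu_of g))"
proof -
  let ?q = "col_au (xa_of g) 0 :: real^('m+'s)" and ?p = "col_au 0 (xu_of g) :: real^('m+'s)"
  have "g \<bullet> (A *v g) = (?q + ?p) \<bullet> (A *v (?q + ?p))" by (simp only: col_split[of g, symmetric])
  also have "\<dots> = ?q \<bullet> (A *v ?q) + ?q \<bullet> (A *v ?p) + ?p \<bullet> (A *v ?q) + ?p \<bullet> (A *v ?p)"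
    by (simp add: matrix_vector_right_distrib inner_add_left inner_add_right)
  also have "?p \<bullet> (A *v ?q) = ?q \<bullet> (A *v ?p)" by (rule sym_swap[OF sym])
  finally show ?thesis by (simp add: quad_q cross_q)
qed

lemma skew_blk:
  fixes A :: "real^('m::finite+'s::finite)^('m+'s)"
  assumes "transpose A = - A"
  shows "a \<bullet> (blk_aa A *v a) = 0"
  using skew_quad[OF assms, of "col_au a 0"] by (simp add: quad_q)

lemma fst_cl:
  assumes Kw: "Ki *v wb = dbar"
    and J_skew: "transpose (J (fst p)) = - J (fst p)" and R_sym: "transpose (R (fst p)) = R (fst p)"
  shows "gradH (fst p) \<bullet> fst (closed_loop J R Gd dbar Ki Rc2 gradH p) =
     - (col_au 0 (xu_of (gradH (fst p))) \<bullet> (R (fst p) *v col_au 0 (xu_of (gradH (fst p)))))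
     - xa_of (gradH (fst p)) \<bullet> (Rc2 *v xa_of (gradH (fst p)))
     + xa_of (gradH (fst p)) \<bullet> (Gd (fst p) *v (xa_of (gradH (fst p)) + Ki *v (snd p - wb)))"
proof -
  obtain x c where p: "p = (x, c)" by (cases p)
  let ?g = "gradH x"
  have u: "control_u J R Gd Ki Rc2 gradH x (xa_of x - c) =
     - (blk_aa (J x) *v xa_of ?g) + blk_aa (R x) *v xa_of ?g + Gd x *v xa_of ?g - Rc2 *v xa_of ?g
     + Gd x *v (Ki *v c) + 2 *\<^sub>R (blk_au (R x) *v xu_of ?g)"
    unfolding control_u_def
    by (simp add: Jc1_Rc1 Jc1_Rc1_mv matrix_vector_mult_add_rdistrib matrix_vector_mult_diff_rdistrib mv_uminus)
  have gJ: "?g \<bullet> (J x *v ?g) = 0" using skew_quad J_skew p by simp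
  have gR: "?g \<bullet> (R x *v ?g) = xa_of ?g \<bullet> (blk_aa (R x) *v xa_of ?g) + 2 * (xa_of ?g \<bullet> (blk_au (R x) *v xu_of ?g))
     + col_au 0 (xu_of ?g) \<bullet> (R x *v col_au 0 (xu_of ?g))"
    using quad_split R_sym p by simp
  have Jaa: "xa_of ?g \<bullet> (blk_aa (J x) *v xa_of ?g) = 0" using skew_blk J_skew p by simp
  have col: "?g \<bullet> col_au v 0 = xa_of ?g \<bullet> v" for v by (subst inner_split) simp
  have "?g \<bullet> fst (closed_loop J R Gd dbar Ki Rc2 gradH (x, c)) =
      ?g \<bullet> (J x *v ?g) - ?g \<bullet> (R x *v ?g) + xa_of ?g \<bullet> (control_u J R Gd Ki Rc2 gradH x (xa_of x - c) - Gd x *v dbar)"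
    unfolding closed_loop_def Let_def plant_field_def
    by (simp add: matrix_vector_mult_diff_rdistrib inner_add_right inner_diff_right col)
  also have "\<dots> = - (col_au 0 (xu_of ?g) \<bullet> (R x *v col_au 0 (xu_of ?g)))
     - xa_of ?g \<bullet> (Rc2 *v xa_of ?g) + xa_of ?g \<bullet> (Gd x *v (xa_of ?g + Ki *v (c - wb)))"
    unfolding gJ gR u using Kw Jaa
    by (simp add: inner_add_right inner_diff_right matrix_vector_right_distrib matrix_vector_mult_diff_distrib
        inner_minus_right inner_scaleR_right algebra_simps)
  finally show ?thesis using p by simp
qed

lemma grad_cont:
  fixes H :: "real^'n \<Rightarrow> real"
  assumes sm: "smooth_fun H" and gr: "\<forall>x. (H has_derivative (\<lambda>h. gradH x \<bullet> h)) (at x)"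
  shows "continuous_on UNIV gradH"
proof -
  obtain S where S: "H \<in> S" "\<forall>h\<in>S. continuous_on UNIV h \<and>
        (\<forall>i. \<exists>h'\<in>S. \<forall>x. ((\<lambda>t. h (x + t *\<^sub>R axis i 1)) has_field_derivative h' x) (at 0))"
    using sm unfolding smooth_fun_def by blast
  have "continuous_on UNIV (\<lambda>x. gradH x $ i)" for i
  proof -
    obtain h' where h': "h' \<in> S" "\<forall>x. ((\<lambda>t. H (x + t *\<^sub>R axis i 1)) has_field_derivative h' x) (at 0)"
      using S by blast
    have "gradH x $ i = h' x" for x
    proof -
      have d1: "((\<lambda>t. x + t *\<^sub>R axis i 1) has_derivative (\<lambda>t. t *\<^sub>R axis i 1)) (at 0)"
        by (auto intro!: derivative_eq_intros)
      have d2: "(H has_derivative (\<lambda>h. gradH x \<bullet> h)) (at ((\<lambda>t. x + t *\<^sub>R axis i (1::real)) 0))"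
        using gr by simp
      have "((\<lambda>t. H (x + t *\<^sub>R axis i 1)) has_derivative (\<lambda>t. gradH x \<bullet> (t *\<^sub>R axis i 1))) (at 0)"
        using has_derivative_compose[OF d1 d2] by simp
      moreover have "(\<lambda>t. gradH x \<bullet> (t *\<^sub>R axis i 1)) = (*) (gradH x $ i)"
        by (auto simp: fun_eq_iff inner_axis)
      ultimately have "((\<lambda>t. H (x + t *\<^sub>R axis i 1)) has_field_derivative gradH x $ i) (at 0)"
        by (simp add: has_field_derivative_def)
      then show ?thesis using h'(2) DERIV_unique by blast
    qed
    then have "(\<lambda>x. gradH x $ i) = h'" by auto
    then show ?thesis using S h' by auto
  qed
  then have "continuous_on UNIV (\<lambda>x. \<chi> i. gradH x $ i)" by (intro continuous_on_vec_lambda)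
  then show ?thesis by simp
qed

lemma Ki_facts:
  fixes Ki :: "real^'m^'m"
  assumes pd: "pos_def Ki"
  shows "Ki *v (matrix_inv Ki *v d) = d"
proof -
  have "\<forall>x. Ki *v x = 0 \<longrightarrow> x = 0"
    using pd unfolding pos_def_def by (metis inner_zero_right less_irrefl)
  then have "\<exists>B. B ** Ki = mat 1" by (simp add: matrix_left_invertible_ker)
  then have "invertible Ki" by (simp add: invertible_left_inverse)
  then have "Ki ** matrix_inv Ki = mat 1 \<and> matrix_inv Ki ** Ki = mat 1"
    unfolding invertible_def matrix_inv_def by (rule someI_ex)
  then show ?thesis by (simp add: matrix_vector_mul_assoc)
qed

lemma quad_lower:
  fixes Ki :: "real^'m^'m"
  assumes pd: "pos_def Ki"
  shows "\<exists>l>0. \<forall>v. l * (norm v)^2 \<le> v \<bullet> (Ki *v v)"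
proof -
  have ne: "sphere (0::real^'m) 1 \<noteq> {}" by simp
  have c: "continuous_on (sphere 0 1) (\<lambda>v::real^'m. v \<bullet> (Ki *v v))" by (intro continuous_intros)
  obtain u where u: "u \<in> sphere 0 1" "\<forall>v\<in>sphere 0 1. u \<bullet> (Ki *v u) \<le> v \<bullet> (Ki *v v)"
    using continuous_attains_inf[OF compact_sphere ne c] by blast
  have "u \<noteq> 0" using u(1) by auto
  then have lpos: "u \<bullet> (Ki *v u) > 0" using pd by (simp add: pos_def_def)
  show ?thesis
  proof (intro exI[of _ "u \<bullet> (Ki *v u)"] conjI allI lpos)
    fix v :: "real^'m"
    show "(u \<bullet> (Ki *v u)) * (norm v)^2 \<le> v \<bullet> (Ki *v v)"
    proof (cases "v = 0")
      case True then show ?thesis by simp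
    next
      case False
      let ?w = "(1 / norm v) *\<^sub>R v"
      have "?w \<in> sphere 0 1" using False by simp
      then have "u \<bullet> (Ki *v u) \<le> ?w \<bullet> (Ki *v ?w)" using u(2) by blast
      also have "?w \<bullet> (Ki *v ?w) = (v \<bullet> (Ki *v v)) / (norm v)^2"
        by (simp add: matrix_vector_mult_scaleR power2_eq_square)
      finally show ?thesis using False by (simp add: pos_le_divide_eq)
    qed
  qed
qed

lemma col_zero: "col_au 0 0 = 0"
  by (simp add: col_au_def vec_eq_iff split: sum.splits)

theorem proposition2:
  fixes H :: "real^('m::finite + 's::finite) \<Rightarrow> real"
    and gradH :: "real^('m + 's) \<Rightarrow> real^('m + 's)"
    and J R :: "real^('m + 's) \<Rightarrow> real^('m + 's)^('m + 's)"
    and Gd :: "real^('m + 's) \<Rightarrow> real^'m^'m"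
    and dbar :: "real^'m"
    and Ki Rc2 :: "real^'m^'m"
    and xstar :: "real^('m + 's)"
  assumes H_smooth: "smooth_fun H"
    and H_nonneg: "\<forall>x. H x \<ge> 0"
    and H_grad: "\<forall>x. (H has_derivative (\<lambda>h. gradH x \<bullet> h)) (at x)"
    and H_isolated_min: "\<exists>r>0. \<forall>x. 0 < norm (x - xstar) \<and> norm (x - xstar) < r \<longrightarrow> H xstar < H x"
    and J_smooth: "smooth_mat J" and J_skew: "\<forall>x. transpose (J x) = - J x"
    and R_smooth: "smooth_mat R" and R_sym: "\<forall>x. transpose (R x) = R x"
    and R_psd: "\<forall>x. pos_semidef (R x)"
    and Gd_smooth: "smooth_mat Gd"
    and Gd_full_rank: "\<forall>x. rank (Gd x) = CARD('m)"
    and Gd_neg: "\<forall>x. neg_def (Gd x)"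
    and Ki_sym: "transpose Ki = Ki" and Ki_pd: "pos_def Ki"
    and Rc2_pd: "pos_def Rc2"
  shows "equilibrium (closed_loop J R Gd dbar Ki Rc2 gradH) (xstar, matrix_inv Ki *v dbar)
       \<and> lyap_stable (closed_loop J R Gd dbar Ki Rc2 gradH) (xstar, matrix_inv Ki *v dbar)
       \<and> (detectable (closed_loop J R Gd dbar Ki Rc2 gradH)
            (\<lambda>w. (xa_of (gradH (fst w)), snd w - matrix_inv Ki *v dbar))
            (xstar, matrix_inv Ki *v dbar)
          \<longrightarrow> asympt_stable (closed_loop J R Gd dbar Ki Rc2 gradH) (xstar, matrix_inv Ki *v dbar))
       \<and> (radially_unbounded H \<longrightarrow>
            glob_stable (closed_loop J R Gd dbar Ki Rc2 gradH) (xstar, matrix_inv Ki *v dbar)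
          \<and> (detectable (closed_loop J R Gd dbar Ki Rc2 gradH)
               (\<lambda>w. (xa_of (gradH (fst w)), snd w - matrix_inv Ki *v dbar))
               (xstar, matrix_inv Ki *v dbar)
             \<longrightarrow> glob_asympt_stable (closed_loop J R Gd dbar Ki Rc2 gradH) (xstar, matrix_inv Ki *v dbar)))"
proof -
  define wb where "wb = matrix_inv Ki *v dbar"
  define e where "e = (xstar, wb)"
  define F where "F = closed_loop J R Gd dbar Ki Rc2 gradH"
  define V where "V p = H (fst p) + (1/2) * ((snd p - wb) \<bullet> (Ki *v (snd p - wb)))" for p
  define DV where "DV p h = gradH (fst p) \<bullet> fst h + (Ki *v (snd p - wb)) \<bullet> snd h" for p h
  have Kw: "Ki *v wb = dbar" unfolding wb_def by (rule Ki_facts[OF Ki_pd])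
  have qpos: "v \<noteq> 0 \<Longrightarrow> v \<bullet> (Ki *v v) > 0" for v using Ki_pd by (simp add: pos_def_def)
  have qnn: "v \<bullet> (Ki *v v) \<ge> 0" for v using qpos[of v] by (cases "v = 0") auto
  have Kinj: "Ki *v v = 0 \<Longrightarrow> v = 0" for v using qpos[of v] by auto
  obtain r where r: "r > 0" "\<forall>x. 0 < norm (x - xstar) \<and> norm (x - xstar) < r \<longrightarrow> H xstar < H x"
    using H_isolated_min by blast
  have gstar: "gradH xstar = 0"
  proof -
    have "(\<lambda>h. gradH xstar \<bullet> h) = (\<lambda>h. 0)"
    proof (rule differential_zero_maxmin[of xstar "ball xstar r" H])
      show "xstar \<in> ball xstar r" using r by simp
      show "(H has_derivative (\<lambda>h. gradH xstar \<bullet> h)) (at xstar)" using H_grad by simp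
      show "(\<forall>y\<in>ball xstar r. H y \<le> H xstar) \<or> (\<forall>y\<in>ball xstar r. H xstar \<le> H y)"
        using r(2) by (metis dist_norm le_less mem_ball norm_minus_commute zero_less_norm_iff order.refl right_minus_eq)
    qed simp
    then have "gradH xstar \<bullet> gradH xstar = 0" by metis
    then show ?thesis by simp
  qed
  have contg: "continuous_on UNIV gradH" by (rule grad_cont[OF H_smooth H_grad])
  have contJ: "continuous_on UNIV J" by (rule smooth_mat_cont[OF J_smooth])
  have contR: "continuous_on UNIV R" by (rule smooth_mat_cont[OF R_smooth])
  have contG: "continuous_on UNIV Gd" by (rule smooth_mat_cont[OF Gd_smooth])
  have cJ: "continuous_on UNIV (\<lambda>p. J (fst p))" using continuous_on_compose2[OF contJ continuous_on_fst[OF continuous_on_id]] by simp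
  have cR: "continuous_on UNIV (\<lambda>p. R (fst p))" using continuous_on_compose2[OF contR continuous_on_fst[OF continuous_on_id]] by simp
  have cG: "continuous_on UNIV (\<lambda>p. Gd (fst p))" using continuous_on_compose2[OF contG continuous_on_fst[OF continuous_on_id]] by simp
  have cg: "continuous_on UNIV (\<lambda>p. gradH (fst p))" using continuous_on_compose2[OF contg continuous_on_fst[OF continuous_on_id]] by simp
  have contF: "continuous_on UNIV F"
    unfolding F_def closed_loop_def Let_def plant_field_def control_u_def controller_field_def Jc1_def Rc1_def
    by (intro continuous_intros cJ cR cG cg)
  have Vder: "(V has_derivative DV p) (at p)" for p
  proof -
    have dH: "((\<lambda>p. H (fst p)) has_derivative (\<lambda>h. gradH (fst p) \<bullet> fst h)) (at p)"
      using has_derivative_compose[OF has_derivative_fst[OF has_derivative_ident] H_grad[rule_format, of "fst p"]] .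
    have ds: "((\<lambda>p. snd p - wb) has_derivative (\<lambda>h. snd h)) (at p)"
      using has_derivative_diff[OF has_derivative_snd[OF has_derivative_ident] has_derivative_const[of wb]] by simp
    have dK: "((\<lambda>p. Ki *v (snd p - wb)) has_derivative (\<lambda>h. Ki *v snd h)) (at p)"
      using bounded_linear.has_derivative[OF matrix_vector_mul_bounded_linear ds] .
    have dq: "((\<lambda>p. (snd p - wb) \<bullet> (Ki *v (snd p - wb))) has_derivative
        (\<lambda>h. (snd p - wb) \<bullet> (Ki *v snd h) + snd h \<bullet> (Ki *v (snd p - wb)))) (at p)"
      using has_derivative_inner[OF ds dK] .
    have dV: "(V has_derivative (\<lambda>h. gradH (fst p) \<bullet> fst h + (1/2) * ((snd p - wb) \<bullet> (Ki *v snd h) + snd h \<bullet> (Ki *v (snd p - wb))))) (at p)"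
      unfolding V_def[abs_def] by (intro has_derivative_add dH has_derivative_mult_right dq)
    have "(\<lambda>h. gradH (fst p) \<bullet> fst h + (1/2) * ((snd p - wb) \<bullet> (Ki *v snd h) + snd h \<bullet> (Ki *v (snd p - wb)))) = DV p"
    proof
      fix h :: "(real^('m+'s)) \<times> (real^'m)"
      have "(snd p - wb) \<bullet> (Ki *v snd h) = snd h \<bullet> (Ki *v (snd p - wb))" by (rule sym_swap[OF Ki_sym])
      then show "gradH (fst p) \<bullet> fst h + (1/2) * ((snd p - wb) \<bullet> (Ki *v snd h) + snd h \<bullet> (Ki *v (snd p - wb))) = DV p h"
        by (simp add: DV_def inner_commute)
    qed
    then show ?thesis using dV by simp
  qed
  have DVF: "DV p (F p) = (xa_of (gradH (fst p)) + Ki *v (snd p - wb)) \<bullet> (Gd (fst p) *v (xa_of (gradH (fst p)) + Ki *v (snd p - wb)))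
     - xa_of (gradH (fst p)) \<bullet> (Rc2 *v xa_of (gradH (fst p)))
     - col_au 0 (xu_of (gradH (fst p))) \<bullet> (R (fst p) *v col_au 0 (xu_of (gradH (fst p))))" for p
  proof -
    have f: "gradH (fst p) \<bullet> fst (F p) = - (col_au 0 (xu_of (gradH (fst p))) \<bullet> (R (fst p) *v col_au 0 (xu_of (gradH (fst p)))))
     - xa_of (gradH (fst p)) \<bullet> (Rc2 *v xa_of (gradH (fst p)))
     + xa_of (gradH (fst p)) \<bullet> (Gd (fst p) *v (xa_of (gradH (fst p)) + Ki *v (snd p - wb)))"
      unfolding F_def using J_skew R_sym by (intro fst_cl[OF Kw]) auto
    have s: "snd (F p) = Gd (fst p) *v (xa_of (gradH (fst p)) + Ki *v (snd p - wb))"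
      unfolding F_def by (rule snd_cl[OF Kw])
    show ?thesis unfolding DV_def f s by (simp add: inner_add_left algebra_simps)
  qed
  have Vle: "DV p (F p) \<le> 0" for p
  proof -
    have "(xa_of (gradH (fst p)) + Ki *v (snd p - wb)) \<bullet> (Gd (fst p) *v (xa_of (gradH (fst p)) + Ki *v (snd p - wb))) \<le> 0"
      using Gd_neg unfolding neg_def_def by (metis inner_zero_left le_less matrix_vector_mult_0_right)
    moreover have "xa_of (gradH (fst p)) \<bullet> (Rc2 *v xa_of (gradH (fst p))) \<ge> 0"
      using Rc2_pd unfolding pos_def_def by (metis inner_zero_left le_less matrix_vector_mult_0_right)
    moreover have "col_au 0 (xu_of (gradH (fst p))) \<bullet> (R (fst p) *v col_au 0 (xu_of (gradH (fst p)))) \<ge> 0"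
      using R_psd unfolding pos_semidef_def by blast
    ultimately show ?thesis unfolding DVF by linarith
  qed
  have DV0: "xa_of (gradH (fst p)) = 0 \<and> snd p - wb = 0" if "DV p (F p) = 0" for p
  proof -
    let ?a = "xa_of (gradH (fst p))" and ?z = "Ki *v (snd p - wb)"
    have A: "(?a + ?z) \<bullet> (Gd (fst p) *v (?a + ?z)) \<le> 0"
      using Gd_neg unfolding neg_def_def by (metis inner_zero_left le_less matrix_vector_mult_0_right)
    have B: "?a \<bullet> (Rc2 *v ?a) \<ge> 0"
      using Rc2_pd unfolding pos_def_def by (metis inner_zero_left le_less matrix_vector_mult_0_right)
    have C: "col_au 0 (xu_of (gradH (fst p))) \<bullet> (R (fst p) *v col_au 0 (xu_of (gradH (fst p)))) \<ge> 0"
      using R_psd unfolding pos_semidef_def by blast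
    have "?a \<bullet> (Rc2 *v ?a) = 0" "(?a + ?z) \<bullet> (Gd (fst p) *v (?a + ?z)) = 0"
      using that A B C unfolding DVF by linarith+
    then have a0: "?a = 0" and az: "?a + ?z = 0"
      using Rc2_pd Gd_neg unfolding pos_def_def neg_def_def by (metis less_irrefl)+
    then have "?z = 0" by simp
    then show ?thesis using a0 Kinj by blast
  qed
  have eq: "F e = 0"
  proof -
    have "F e = (fst (F e), snd (F e))" by simp
    also have "snd (F e) = 0" unfolding F_def snd_cl[OF Kw] by (simp add: e_def gstar)
    also have "fst (F e) = 0"
      unfolding F_def e_def closed_loop_def Let_def plant_field_def control_u_def controller_field_def
      by (simp add: gstar Kw Jc1_Rc1 col_zero flip: matrix_vector_mult_diff_rdistrib)
    finally show ?thesis by (simp add: zero_prod_def)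
  qed
  have Ve: "V e = H xstar" by (simp add: V_def e_def)
  have pos: "\<exists>r>0. \<forall>p. 0 < norm (p - e) \<and> norm (p - e) < r \<longrightarrow> V e < V p"
  proof (intro exI[of _ r] conjI allI impI)
    show "r > 0" by (rule r(1))
    fix p :: "(real^('m+'s)) \<times> (real^'m)"
    assume p: "0 < norm (p - e) \<and> norm (p - e) < r"
    obtain x c where pxc: "p = (x, c)" by (cases p)
    have pe: "p - e = (x - xstar, c - wb)" by (simp add: pxc e_def)
    have nx: "norm (x - xstar) < r" using p norm_fst_le[of "x - xstar" "c - wb"] by (simp add: pe)
    show "V e < V p"
    proof (cases "x = xstar")
      case True
      then have "c - wb \<noteq> 0" using p pe by auto
      then show ?thesis using qpos[of "c - wb"] True unfolding Ve by (simp add: V_def pxc)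
    next
      case False
      then have "H xstar < H x" using r(2) nx by auto
      then show ?thesis using qnn[of "c - wb"] unfolding Ve by (simp add: V_def pxc)
    qed
  qed
  have stab: "lyap_stable F e" by (rule lyap_from_V[OF Vder Vle pos])
  have detY: "(y \<longlongrightarrow> e) at_top"
    if det: "detectable F (\<lambda>w. (xa_of (gradH (fst w)), snd w - wb)) e"
      and ys: "ode_sol F y" and y0: "\<And>t. t \<ge> 0 \<Longrightarrow> DV (y t) (F (y t)) = 0" for y
  proof -
    have "(xa_of (gradH (fst (y t))), snd (y t) - wb) = 0" if "t \<ge> 0" for t
      using DV0[OF y0[OF that]] by (simp add: zero_prod_def)
    then show ?thesis using det ys unfolding detectable_def by blast
  qed
  have asym: "asympt_stable F e" if det: "detectable F (\<lambda>w. (xa_of (gradH (fst w)), snd w - wb)) e"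
  proof -
    obtain \<delta> where \<delta>: "\<delta> > 0" "\<forall>T w. ode_sol_on F T w \<and> norm (w 0 - e) < \<delta> \<longrightarrow> (\<forall>t\<in>{0..T}. norm (w t - e) < 1)"
      using stab unfolding lyap_stable_def by (meson zero_less_one)
    have "(w \<longlongrightarrow> e) at_top" if ws: "ode_sol F w" and w0: "norm (w 0 - e) < \<delta>" for w
    proof (rule lasalle_gen[OF contF Vder Vle stab _ ws compact_cball[of e 1]])
      show "(y \<longlongrightarrow> e) at_top" if "ode_sol F y" "\<And>t. t \<ge> 0 \<Longrightarrow> DV (y t) (F (y t)) = 0" for y
        by (rule detY[OF det that])
      show "w t \<in> cball e 1" if "t \<ge> 0" for t
      proof -
        have "norm (w t - e) < 1"
          using \<delta>(2)[rule_format, of t w] sol_restrict[OF ws, of t] w0 that by auto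
        then show ?thesis by (simp add: dist_norm norm_minus_commute)
      qed
    qed
    then show ?thesis unfolding asympt_stable_def using stab \<delta>(1) by blast
  qed
  have sublevel: "\<exists>B. \<forall>p. V p \<le> c \<longrightarrow> norm p \<le> B" if ru: "radially_unbounded H" for c
  proof -
    have "eventually (\<lambda>x. H x > c) at_infinity"
      using ru unfolding radially_unbounded_def filterlim_at_top_dense by blast
    then obtain Rb where Rb: "\<forall>x. Rb \<le> norm x \<longrightarrow> H x > c" unfolding eventually_at_infinity by blast
    obtain l where l: "l > 0" "\<forall>v. l * (norm v)^2 \<le> v \<bullet> (Ki *v v)" using quad_lower[OF Ki_pd] by blast
    show ?thesis
    proof (intro exI[of _ "Rb + norm wb + max 1 (2 * c / l)"] allI impI)
      fix p :: "(real^('m+'s)) \<times> (real^'m)"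
      assume Vp: "V p \<le> c"
      obtain x v where pxc: "p = (x, v)" by (cases p)
      have q: "(v - wb) \<bullet> (Ki *v (v - wb)) \<le> 2 * c" using Vp H_nonneg[rule_format, of x] by (simp add: V_def pxc)
      have "H x \<le> c" using Vp qnn[of "v - wb"] by (simp add: V_def pxc)
      then have nx: "norm x \<le> Rb" using Rb by (meson linorder_not_le nle_le)
      have nv: "norm (v - wb) \<le> max 1 (2 * c / l)"
      proof (cases "norm (v - wb) \<le> 1")
        case True then show ?thesis by simp
      next
        case False
        then have "norm (v - wb) \<le> (norm (v - wb))^2" by (simp add: power2_eq_square) (metis less_le_not_le mult_le_cancel_left1 nle_le norm_ge_zero order_trans)
        then have "l * norm (v - wb) \<le> l * (norm (v - wb))^2" using l(1) by simp
        also have "\<dots> \<le> 2 * c" using l(2) q order_trans by blast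
        finally have "norm (v - wb) \<le> 2 * c / l" using l(1) by (simp add: field_simps)
        then show ?thesis by simp
      qed
      have "norm v \<le> norm wb + norm (v - wb)" using norm_triangle_ineq[of wb "v - wb"] by simp
      then show "norm p \<le> Rb + norm wb + max 1 (2 * c / l)"
        using norm_Pair_le[of x v] nx nv by (simp add: pxc)
    qed
  qed
  have Vmono: "V (w t) \<le> V (w 0)" if "\<And>\<tau>. \<tau> \<in> {0..t} \<Longrightarrow> (w has_vector_derivative F (w \<tau>)) (at \<tau> within S)"
     "{0..t} \<subseteq> S" "t \<ge> 0" for w t S
    by (rule V_mono_gen[OF Vder Vle that])
  have glob: "glob_stable F e" if ru: "radially_unbounded H"
    unfolding glob_stable_def
  proof (intro conjI stab allI)
    fix w0
    obtain B where B: "\<forall>p. V p \<le> V w0 \<longrightarrow> norm p \<le> B" using sublevel[OF ru] by blast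
    show "\<exists>B. \<forall>T w. ode_sol_on F T w \<and> w 0 = w0 \<longrightarrow> (\<forall>t\<in>{0..T}. norm (w t) \<le> B)"
    proof (intro exI[of _ B] allI impI ballI)
      fix T w t assume H: "ode_sol_on F T w \<and> w 0 = w0" and t: "t \<in> {0..T}"
      have "V (w t) \<le> V (w 0)"
        by (rule Vmono[of t w "{0..T}"]) (use H t in \<open>auto simp: ode_sol_on_def\<close>)
      then show "norm (w t) \<le> B" using B[rule_format, of "w t"] H by simp
    qed
  qed
  have gasym: "glob_asympt_stable F e"
    if ru: "radially_unbounded H" and det: "detectable F (\<lambda>w. (xa_of (gradH (fst w)), snd w - wb)) e"
    unfolding glob_asympt_stable_def
  proof (intro conjI stab allI impI)
    fix w assume ws: "ode_sol F w"
    obtain B where B: "\<forall>p. V p \<le> V (w 0) \<longrightarrow> norm p \<le> B" using sublevel[OF ru] by blast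
    show "(w \<longlongrightarrow> e) at_top"
    proof (rule lasalle_gen[OF contF Vder Vle stab _ ws compact_cball[of 0 B]])
      show "(y \<longlongrightarrow> e) at_top" if "ode_sol F y" "\<And>t. t \<ge> 0 \<Longrightarrow> DV (y t) (F (y t)) = 0" for y
        by (rule detY[OF det that])
      show "w t \<in> cball 0 B" if "t \<ge> 0" for t
      proof -
        have "V (w t) \<le> V (w 0)"
          by (rule Vmono[of t w "{0..}"]) (use ws that in \<open>auto simp: ode_sol_def\<close>)
        then show ?thesis using B[rule_format, of "w t"] by simp
      qed
    qed
  qed
  have eqd: "equilibrium F e" using eq by (simp add: equilibrium_def)
  show ?thesis
    using eqd stab asym glob gasym unfolding F_def e_def wb_def by blast
qed

end
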